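(* Let $m\geq 2$ and let $f=a_0+a_1z+\cdots+a_mz^m\in\mathbb{Z}[z]$ be a primitive polynomial with $a_0a_m\neq 0$. Let $b$ be a positive divisor of $a_m$ and $\delta$ a real number with $1/b\leq\delta\leq 1$, and suppose there is an index $j$ with $0\leq j\leq m-1$ such that $$|a_j|>\sum_{0\leq i<j}|a_i||a_m|^{j-i}+\sum_{j<i\leq m}|a_i|\delta^{i-j},$$ where an empty sum is $0$. Then $f$ is a product of at most $m-j$ irreducible polynomials in $\mathbb{Z}[z]$. In particular, if $j=m-1$, then $f$ is irreducible in $\mathbb{Z}[z]$.
   Context: A polynomial in $\mathbb{Z}[z]$ is primitive if the greatest common divisor of its coefficients is $1$. "$f$ is a product of at most $r$ irreducible polynomials" means that in a factorization of $f$ into irreducible elements of $\mathbb{Z}[z]$, the number of factors (counted with multiplicity) is at most $r$. *)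

theory Defs
  imports Complex_Main "HOL-Computational_Algebra.Polynomial_Factorial"
begin

end

theory Submission
  imports "HOL-Complex_Analysis.Complex_Analysis" "HOL-Computational_Algebra.Fundamental_Theorem_Algebra" Defs
begin


lemma zorder_poly:
  fixes p :: "complex poly"
  assumes "p \<noteq> 0"
  shows "zorder (poly p) z = int (order z p)"
proof -
  obtain q where q: "p = [:-z,1:]^order z p * q" "\<not> [:-z,1:] dvd q"
    using order_decomp[OF assms] by blast
  have qz: "poly q z \<noteq> 0" using q(2) by (simp add: poly_eq_0_iff_dvd)
  show ?thesis
  proof (rule zorder_eqI[of UNIV z "poly q"])
    fix w assume "w \<in> (UNIV::complex set)" "w \<noteq> z"
    have "poly p w = poly q w * (w - z) ^ order z p"
      by (subst q(1)) (simp add: poly_power)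
    then show "poly p w = poly q w * (w - z) powi int (order z p)"
      by (simp add: power_int_of_nat)
  qed (auto simp: qz intro!: holomorphic_intros)
qed

lemma zorder_monom:
  fixes c :: complex
  assumes "c \<noteq> 0"
  shows "zorder (\<lambda>z. c * z ^ k) 0 = int k"
  by (rule zorder_eqI[of UNIV 0 "\<lambda>_. c"]) (auto simp: assms power_int_of_nat)

lemma size_filter_proots:
  fixes P :: "complex poly"
  assumes "P \<noteq> 0"
  shows "size (filter_mset Q (proots P)) = (\<Sum>z\<in>{z. poly P z = 0 \<and> Q z}. order z P)"
proof -
  have "size (filter_mset Q (proots P)) = sum (count (filter_mset Q (proots P))) (set_mset (filter_mset Q (proots P)))"
    by (rule size_multiset_overloaded_eq)
  also have "set_mset (filter_mset Q (proots P)) = {z. poly P z = 0 \<and> Q z}"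
    using assms by auto
  also have "sum (count (filter_mset Q (proots P))) {z. poly P z = 0 \<and> Q z} = (\<Sum>z\<in>{z. poly P z = 0 \<and> Q z}. order z P)"
    using assms by (intro sum.cong) auto
  finally show ?thesis .
qed

lemma rouche_count:
  fixes P :: "complex poly" and c :: complex and r :: real
  assumes P: "P \<noteq> 0" and r: "r > 0" and c: "c \<noteq> 0"
    and less: "\<And>z. cmod z = r \<Longrightarrow> cmod (poly P z - c * z ^ k) < cmod (c * z ^ k)"
  shows "size (filter_mset (\<lambda>z. cmod z < r) (proots P)) = k"
proof -
  define f0 where "f0 = (\<lambda>z::complex. c * z ^ k)"
  define g0 where "g0 = (\<lambda>z. poly P z - c * z ^ k)"
  define \<gamma> where "\<gamma> = circlepath (0::complex) r"
  have fg: "(\<lambda>p. f0 p + g0 p) = poly P" by (auto simp: f0_def g0_def)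
  have fg2: "\<And>p. f0 p + g0 p = poly P p" by (auto simp: f0_def g0_def)
  have pim: "path_image \<gamma> = sphere 0 r" using r by (simp add: \<gamma>_def path_image_circlepath_nonneg)
  have R: "(\<Sum>p | p \<in> UNIV \<and> f0 p + g0 p = 0. winding_number \<gamma> p * complex_of_int (zorder (\<lambda>p. f0 p + g0 p) p)) =
     (\<Sum>p | p \<in> UNIV \<and> f0 p = 0. winding_number \<gamma> p * complex_of_int (zorder f0 p))"
  proof (rule Rouche_theorem)
    show "finite {p \<in> UNIV. f0 p + g0 p = 0}" using poly_roots_finite[OF P] by (simp add: fg2)
    show "finite {p \<in> UNIV. f0 p = 0}"
      by (rule finite_subset[of _ "{0}"]) (auto simp: f0_def c)
    show "f0 holomorphic_on UNIV" unfolding f0_def by (intro holomorphic_intros)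
    show "g0 holomorphic_on UNIV" unfolding g0_def by (intro holomorphic_intros)
    show "\<forall>z\<in>path_image \<gamma>. cmod (g0 z) < cmod (f0 z)"
      using less by (auto simp: pim f0_def g0_def)
  qed (auto simp: \<gamma>_def)
  have L: "(\<Sum>p | p \<in> UNIV \<and> f0 p + g0 p = 0. winding_number \<gamma> p * complex_of_int (zorder (\<lambda>p. f0 p + g0 p) p))
     = of_nat (\<Sum>z\<in>{z. poly P z = 0 \<and> cmod z < r}. order z P)"
  proof -
    have "(\<Sum>p | p \<in> UNIV \<and> f0 p + g0 p = 0. winding_number \<gamma> p * complex_of_int (zorder (\<lambda>p. f0 p + g0 p) p))
        = (\<Sum>p \<in> {z. poly P z = 0}. (if cmod p < r then of_nat (order p P) else 0))"
    proof (intro sum.cong)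
      show "{p \<in> UNIV. f0 p + g0 p = 0} = {z. poly P z = 0}" by (simp add: fg2)
    next
      fix p assume "p \<in> {z. poly P z = 0}"
      hence p0: "poly P p = 0" by simp
      have zo: "zorder (\<lambda>p. f0 p + g0 p) p = int (order p P)" by (simp add: fg zorder_poly P)
      show "winding_number \<gamma> p * complex_of_int (zorder (\<lambda>p. f0 p + g0 p) p) = (if cmod p < r then of_nat (order p P) else 0)"
      proof (cases "cmod p < r")
        case True
        have "winding_number \<gamma> p = 1" unfolding \<gamma>_def by (rule winding_number_circlepath) (use True in simp)
        then show ?thesis using True zo by simp
      next
        case False
        have "cmod p \<noteq> r"
        proof
          assume "cmod p = r"
          from less[OF this] p0 show False by simp
        qed
        with False have gt: "cmod p > r" by simp
        have "winding_number \<gamma> p = 0"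
        proof (rule winding_number_zero_outside[of _ "cball 0 r"])
          show "path \<gamma>" by (simp add: \<gamma>_def)
          show "pathfinish \<gamma> = pathstart \<gamma>" by (simp add: \<gamma>_def)
          show "p \<notin> cball 0 r" using gt by simp
          show "path_image \<gamma> \<subseteq> cball 0 r" using pim by auto
        qed auto
        then show ?thesis using False by simp
      qed
    qed
    also have "\<dots> = (\<Sum>p \<in> {z. poly P z = 0 \<and> cmod z < r}. of_nat (order p P))"
      by (subst sum.inter_filter[symmetric]) (auto simp: poly_roots_finite[OF P] intro!: sum.cong)
    also have "\<dots> = of_nat (\<Sum>z\<in>{z. poly P z = 0 \<and> cmod z < r}. order z P)" by simp
    finally show ?thesis .
  qed
  have RR: "(\<Sum>p | p \<in> UNIV \<and> f0 p = 0. winding_number \<gamma> p * complex_of_int (zorder f0 p)) = of_nat k"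
  proof (cases "k = 0")
    case True
    then have "{p \<in> UNIV. f0 p = 0} = {}" by (auto simp: f0_def c)
    then show ?thesis using True by simp
  next
    case False
    then have "{p \<in> UNIV. f0 p = 0} = {0}" by (auto simp: f0_def c)
    moreover have "winding_number \<gamma> 0 = 1" unfolding \<gamma>_def using r by (simp add: winding_number_circlepath_centre)
    moreover have "zorder f0 0 = int k" unfolding f0_def by (rule zorder_monom[OF c])
    ultimately show ?thesis by simp
  qed
  have "of_nat (\<Sum>z\<in>{z. poly P z = 0 \<and> cmod z < r}. order z P) = (of_nat k :: complex)"
    using R L RR by simp
  hence "(\<Sum>z\<in>{z. poly P z = 0 \<and> cmod z < r}. order z P) = k" using of_nat_eq_iff by blast
  thus ?thesis by (simp add: size_filter_proots[OF P])
qed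



lemma map_of_int_mult:
  "map_poly (of_int :: int \<Rightarrow> complex) (p*q) = map_poly of_int p * map_poly of_int q"
  by (intro poly_eqI) (simp add: coeff_mult coeff_map_poly)

lemma map_of_int_eq0: "map_poly (of_int :: int \<Rightarrow> complex) p = 0 \<longleftrightarrow> p = 0"
  by (metis (no_types) coeff_map_poly leading_coeff_0_iff of_int_0 of_int_eq_0_iff degree_map_poly)

lemma degree_map_of_int: "degree (map_poly (of_int :: int \<Rightarrow> complex) p) = degree p"
  by (rule degree_map_poly) simp

definition bigc :: "real \<Rightarrow> int poly \<Rightarrow> nat" where
  "bigc r g = size (filter_mset (\<lambda>z. r \<le> cmod z) (proots (map_poly (of_int::int\<Rightarrow>complex) g)))"

lemma bigc_mult: "p \<noteq> 0 \<Longrightarrow> q \<noteq> 0 \<Longrightarrow> bigc r (p*q) = bigc r p + bigc r q"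
  unfolding bigc_def map_of_int_mult
  by (subst proots_mult) (auto simp: map_of_int_eq0)

lemma size_le_bigc:
  "(\<forall>p\<in>#P. p \<noteq> 0 \<and> 1 \<le> bigc r p) \<Longrightarrow> size P \<le> bigc r (prod_mset P)"
proof (induction P)
  case empty then show ?case by simp
next
  case (add x P)
  have "prod_mset P \<noteq> 0" using add.prems by (auto simp: prod_mset_zero_iff)
  then have "bigc r (prod_mset (add_mset x P)) = bigc r x + bigc r (prod_mset P)"
    using add.prems by (simp add: bigc_mult)
  then show ?case using add by auto
qed

lemma prod_lt_pow:
  fixes g :: "nat \<Rightarrow> real"
  assumes "\<forall>i<d. 0 \<le> g i \<and> g i < r" "d \<ge> 1"
  shows "(\<Prod>i<d. g i) < r ^ d"
  using assms
proof (induction d)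
  case 0 then show ?case by simp
next
  case (Suc d)
  show ?case
  proof (cases "d = 0")
    case True then show ?thesis using Suc.prems by simp
  next
    case False
    have IH: "(\<Prod>i<d. g i) < r ^ d" using Suc False by auto
    have "(\<Prod>i<Suc d. g i) = g d * (\<Prod>i<d. g i)" by simp
    also have "\<dots> < r * r ^ d"
      using Suc.prems IH by (intro mult_strict_mono') (auto intro: prod_nonneg)
    finally show ?thesis by simp
  qed
qed

lemma factor_big:
  fixes p :: "int poly" and r :: real
  assumes "degree p \<ge> 1" "coeff p 0 \<noteq> 0" "r > 0" "r \<le> 1" "\<bar>real_of_int (lead_coeff p)\<bar> * r \<le> 1"
  shows "1 \<le> bigc r p"
proof (rule ccontr)
  assume "\<not> 1 \<le> bigc r p"
  then have b0: "filter_mset (\<lambda>z. r \<le> cmod z) (proots (map_poly (of_int::int\<Rightarrow>complex) p)) = {#}"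
    unfolding bigc_def by (metis One_nat_def Suc_leI neq0_conv size_eq_0_iff_empty)
  define Pc where "Pc = map_poly (of_int::int\<Rightarrow>complex) p"
  have p0: "p \<noteq> 0" using assms(1) by auto
  have Pc0: "Pc \<noteq> 0" using p0 by (simp add: Pc_def map_of_int_eq0)
  have dPc: "degree Pc = degree p" by (simp add: Pc_def degree_map_of_int)
  have lPc: "lead_coeff Pc = of_int (lead_coeff p)" using dPc by (simp add: Pc_def coeff_map_poly degree_map_of_int)
  obtain root where rt: "smult (lead_coeff Pc) (\<Prod>i<degree Pc. [:-root i, 1:]) = Pc"
    using complex_poly_decompose' by blast
  define d where "d = degree p"
  have small: "cmod (root i) < r" if "i < d" for i
  proof (rule ccontr)
    assume "\<not> cmod (root i) < r"
    moreover have "poly Pc (root i) = 0"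
    proof -
      have "poly (\<Prod>i<degree Pc. [:-root i, 1:]) (root i) = 0"
        using that by (auto simp: poly_prod dPc d_def)
      then show ?thesis by (subst rt[symmetric]) simp
    qed
    ultimately have "root i \<in># filter_mset (\<lambda>z. r \<le> cmod z) (proots Pc)" using Pc0 by auto
    then show False using b0 by (simp add: Pc_def)
  qed
  have "poly Pc 0 = lead_coeff Pc * (\<Prod>i<d. - root i)"
    by (subst rt[symmetric]) (simp add: poly_prod dPc d_def)
  then have "cmod (poly Pc 0) = \<bar>real_of_int (lead_coeff p)\<bar> * (\<Prod>i<d. cmod (root i))"
    by (simp add: lPc norm_mult prod_norm[symmetric])
  also have "\<dots> < \<bar>real_of_int (lead_coeff p)\<bar> * r ^ d"
  proof (rule mult_strict_left_mono)
    show "(\<Prod>i<d. cmod (root i)) < r ^ d" using small assms(1) by (intro prod_lt_pow) (auto simp: d_def)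
    show "0 < \<bar>real_of_int (lead_coeff p)\<bar>" using p0 by simp
  qed
  also have "\<dots> \<le> \<bar>real_of_int (lead_coeff p)\<bar> * r"
    using assms by (intro mult_left_mono power_decreasing[of 1 d r, simplified]) (auto simp: d_def)
  also have "\<dots> \<le> 1" by fact
  finally have lt: "cmod (poly Pc 0) < 1" .
  have "poly Pc 0 = of_int (coeff p 0)" by (simp add: Pc_def poly_0_coeff_0 coeff_map_poly)
  then have "cmod (poly Pc 0) = \<bar>real_of_int (coeff p 0)\<bar>" by (simp only: norm_of_int)
  moreover have "\<bar>real_of_int (coeff p 0)\<bar> \<ge> 1" using assms(2) by linarith
  ultimately show False using lt by simp
qed



lemma exists_irred_factorization:
  fixes f :: "int poly"
  assumes f0: "f \<noteq> 0" and nu: "\<not> is_unit f"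
  obtains P where "\<forall>p\<in>#P. irreducible p" "prod_mset P = f"
proof -
  define A where "A = prime_factorization f"
  have A: "normalize f = normalize (prod_mset A)" using prod_mset_prime_factorization_weak[OF f0] by (simp add: A_def)
  obtain u where u: "is_unit u" and fu: "f = u * prod_mset A" using associatedE1[OF A] by blast
  have "A \<noteq> {#}"
  proof
    assume "A = {#}"
    then have "f = u" using fu by simp
    then show False using nu u by simp
  qed
  then obtain p where p: "p \<in># A" by blast
  define P where "P = add_mset (u*p) (A - {#p#})"
  have irrA: "\<forall>x\<in>#A. irreducible x"
    by (auto simp: A_def intro: prime_elem_imp_irreducible prime_imp_prime_elem in_prime_factors_imp_prime)
  have "\<forall>x\<in>#P. irreducible x"
    using irrA p u by (auto simp: P_def irreducible_mult_unit_left dest: in_diffD)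
  moreover have "prod_mset P = f"
  proof -
    have "prod_mset A = p * prod_mset (A - {#p#})"
      by (subst insert_DiffM[OF p, symmetric]) simp
    then show ?thesis using fu by (simp add: P_def mult.assoc)
  qed
  ultimately show ?thesis using that by blast
qed



lemma circle_ineq:
  fixes f :: "int poly" and m j :: nat and am :: int and r \<delta> :: real and z :: complex
  assumes deg: "degree f = m" and jm: "j \<le> m"
    and am: "am \<noteq> 0" and r: "r * \<bar>real_of_int am\<bar> = 1" "r > 0" and rd: "r \<le> \<delta>"
    and z: "cmod z = r"
    and H: "real_of_int \<bar>coeff f j\<bar> >
           (\<Sum>i<j. real_of_int (\<bar>coeff f i\<bar> * \<bar>am\<bar> ^ (j - i)))
         + (\<Sum>i\<in>{j<..m}. real_of_int \<bar>coeff f i\<bar> * \<delta> ^ (i - j))"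
  shows "cmod (poly (map_poly (of_int::int\<Rightarrow>complex) f) z - of_int (coeff f j) * z ^ j)
         < cmod (of_int (coeff f j) * z ^ j)"
proof -
  define F where "F = map_poly (of_int::int\<Rightarrow>complex) f"
  define t where "t = (\<lambda>i. complex_of_int (coeff f i) * z ^ i)"
  have dF: "degree F = m" using deg by (simp add: F_def degree_map_of_int)
  have "poly F z = (\<Sum>i\<le>m. t i)"
    using dF by (simp add: poly_altdef t_def F_def coeff_map_poly)
  also have "{..m} = {..<j} \<union> insert j {j<..m}" using jm by auto
  also have "(\<Sum>i\<in>{..<j} \<union> insert j {j<..m}. t i) = (\<Sum>i<j. t i) + (t j + (\<Sum>i\<in>{j<..m}. t i))"
    by (subst sum.union_disjoint) auto
  finally have eq: "poly F z - t j = (\<Sum>i<j. t i) + (\<Sum>i\<in>{j<..m}. t i)" by simp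
  have nt: "cmod (t i) = real_of_int \<bar>coeff f i\<bar> * r ^ i" for i
    by (simp add: t_def norm_mult norm_power z)
  have s1: "(\<Sum>i<j. cmod (t i)) = r ^ j * (\<Sum>i<j. real_of_int (\<bar>coeff f i\<bar> * \<bar>am\<bar> ^ (j - i)))"
  proof -
    have "r ^ i = r ^ j * \<bar>real_of_int am\<bar> ^ (j - i)" if "i < j" for i
    proof -
      have "r ^ j * \<bar>real_of_int am\<bar> ^ (j - i) = r ^ i * (r * \<bar>real_of_int am\<bar>) ^ (j - i)"
        using that by (simp add: power_mult_distrib power_add[symmetric])
      then show ?thesis using r by simp
    qed
    then show ?thesis by (simp add: sum_distrib_left nt mult_ac)
  qed
  have s2: "(\<Sum>i\<in>{j<..m}. cmod (t i)) \<le> r ^ j * (\<Sum>i\<in>{j<..m}. real_of_int \<bar>coeff f i\<bar> * \<delta> ^ (i - j))"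
    unfolding sum_distrib_left
  proof (rule sum_mono)
    fix i assume i: "i \<in> {j<..m}"
    have "r ^ i = r ^ j * r ^ (i - j)" using i by (simp add: power_add[symmetric])
    also have "\<dots> \<le> r ^ j * \<delta> ^ (i - j)" using r rd by (intro mult_left_mono power_mono) auto
    finally have "r ^ i \<le> r ^ j * \<delta> ^ (i - j)" .
    show "cmod (t i) \<le> r ^ j * (real_of_int \<bar>coeff f i\<bar> * \<delta> ^ (i - j))"
    proof -
      have "real_of_int \<bar>coeff f i\<bar> * r ^ i \<le> real_of_int \<bar>coeff f i\<bar> * (r ^ j * \<delta> ^ (i - j))"
        using \<open>r ^ i \<le> r ^ j * \<delta> ^ (i - j)\<close> by (intro mult_left_mono) auto
      then show ?thesis unfolding nt by (simp add: mult_ac)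
    qed
  qed
  have "cmod (poly F z - t j) \<le> (\<Sum>i<j. cmod (t i)) + (\<Sum>i\<in>{j<..m}. cmod (t i))"
    unfolding eq by (intro order.trans[OF norm_triangle_ineq] add_mono norm_sum)
  also have "\<dots> \<le> r ^ j * ((\<Sum>i<j. real_of_int (\<bar>coeff f i\<bar> * \<bar>am\<bar> ^ (j - i)))
         + (\<Sum>i\<in>{j<..m}. real_of_int \<bar>coeff f i\<bar> * \<delta> ^ (i - j)))"
    using s1 s2 by (simp add: distrib_left)
  also have "\<dots> < r ^ j * real_of_int \<bar>coeff f j\<bar>"
    using H r by (intro mult_strict_left_mono) auto
  also have "\<dots> = cmod (t j)" by (simp add: nt)
  finally show ?thesis by (simp add: F_def t_def)
qed



theorem theorem4:
  fixes f :: "int poly" and m j :: nat and b :: int and \<delta> :: real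
  assumes "m \<ge> 2"
    and "degree f = m"
    and "content f = 1"
    and "coeff f 0 * coeff f m \<noteq> 0"
    and "b > 0" and "b dvd coeff f m"
    and "1 / real_of_int b \<le> \<delta>" and "\<delta> \<le> 1"
    and "j \<le> m - 1"
    and "real_of_int \<bar>coeff f j\<bar> >
           (\<Sum>i<j. real_of_int (\<bar>coeff f i\<bar> * \<bar>coeff f m\<bar> ^ (j - i)))
         + (\<Sum>i\<in>{j<..m}. real_of_int \<bar>coeff f i\<bar> * \<delta> ^ (i - j))"
  shows "(\<exists>P :: int poly multiset. (\<forall>p\<in>#P. irreducible p) \<and> prod_mset P = f
             \<and> size P \<le> m - j)
         \<and> (j = m - 1 \<longrightarrow> irreducible f)"
proof -
  define am where "am = coeff f m"
  have am0: "am \<noteq> 0" and a00: "coeff f 0 \<noteq> 0" using assms(4) by (auto simp: am_def)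
  have f0: "f \<noteq> 0" using a00 by auto
  have lcf: "lead_coeff f = am" using assms(2) by (simp add: am_def)
  have bam: "b \<le> \<bar>am\<bar>"
  proof -
    have "\<bar>b\<bar> \<le> \<bar>am\<bar>" using dvd_imp_le_int[OF am0] assms(6) by (simp add: am_def)
    then show ?thesis by simp
  qed
  define r where "r = 1 / real_of_int \<bar>am\<bar>"
  have r0: "r > 0" using am0 by (simp add: r_def)
  have ram: "r * \<bar>real_of_int am\<bar> = 1" using am0 by (simp add: r_def)
  have rb: "r \<le> 1 / real_of_int b"
    unfolding r_def using bam assms(5) by (intro divide_left_mono) auto
  have rd: "r \<le> \<delta>" using rb assms(7) by linarith
  have r1: "r \<le> 1" using rd assms(8) by linarith
  have jm: "j \<le> m" using assms(9) by simp
  define F where "F = map_poly (of_int::int\<Rightarrow>complex) f"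
  have F0: "F \<noteq> 0" using f0 by (simp add: F_def map_of_int_eq0)
  have dF: "degree F = m" using assms(2) by (simp add: F_def degree_map_of_int)
  have H: "real_of_int \<bar>coeff f j\<bar> >
           (\<Sum>i<j. real_of_int (\<bar>coeff f i\<bar> * \<bar>am\<bar> ^ (j - i)))
         + (\<Sum>i\<in>{j<..m}. real_of_int \<bar>coeff f i\<bar> * \<delta> ^ (i - j))"
    using assms(10) by (simp add: am_def)
  have nn: "0 \<le> (\<Sum>i<j. real_of_int (\<bar>coeff f i\<bar> * \<bar>am\<bar> ^ (j - i)))
         + (\<Sum>i\<in>{j<..m}. real_of_int \<bar>coeff f i\<bar> * \<delta> ^ (i - j))"
    using r0 rd by (intro add_nonneg_nonneg sum_nonneg) auto
  have aj: "coeff f j \<noteq> 0" using H nn by auto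
  have small: "size (filter_mset (\<lambda>z. cmod z < r) (proots F)) = j"
    unfolding F_def
  proof (rule rouche_count)
    show "map_poly complex_of_int f \<noteq> 0" using F0 by (simp add: F_def)
    show "complex_of_int (coeff f j) \<noteq> 0" using aj by simp
    fix z :: complex assume "cmod z = r"
    then show "cmod (poly (map_poly complex_of_int f) z - complex_of_int (coeff f j) * z ^ j)
         < cmod (complex_of_int (coeff f j) * z ^ j)"
      by (intro circle_ineq[OF assms(2) jm am0 ram r0 rd _ H])
  qed (use r0 in auto)
  have big: "bigc r f = m - j"
  proof -
    have "size (proots F) = m" using dF by (simp add: size_proots_complex)
    moreover have "proots F = filter_mset (\<lambda>z. cmod z < r) (proots F) + filter_mset (\<lambda>z. \<not> cmod z < r) (proots F)"
      by (rule multiset_partition)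
    moreover have "filter_mset (\<lambda>z. \<not> cmod z < r) (proots F) = filter_mset (\<lambda>z. r \<le> cmod z) (proots F)"
      by (auto simp: not_less intro!: filter_mset_cong)
    ultimately have "m = j + size (filter_mset (\<lambda>z. r \<le> cmod z) (proots F))"
      using small by (metis size_union)
    then show ?thesis by (simp add: bigc_def F_def)
  qed
  have nu: "\<not> is_unit f"
  proof
    assume "is_unit f"
    then have "degree f = 0" by (auto simp: is_unit_poly_iff)
    then show False using assms(1,2) by simp
  qed
  obtain P where Pirr: "\<forall>p\<in>#P. irreducible p" and Pf: "prod_mset P = f"
    using exists_irred_factorization[OF f0 nu] by blast
  have fac: "p \<noteq> 0 \<and> 1 \<le> bigc r p" if pP: "p \<in># P" for p
  proof -
    have "p dvd f" using pP Pf dvd_prod_mset by blast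
    then obtain q where fpq: "f = p * q" by (elim dvdE)
    have p0: "p \<noteq> 0" and q0: "q \<noteq> 0" using f0 fpq by auto
    have irr: "irreducible p" using Pirr pP by blast
    have c0: "coeff p 0 \<noteq> 0"
      using a00 by (simp add: fpq poly_0_coeff_0[symmetric])
    have lc: "lead_coeff p * lead_coeff q = am" using lcf fpq by (simp add: lead_coeff_mult)
    have "\<bar>lead_coeff p\<bar> \<le> \<bar>am\<bar>"
    proof -
      have "\<bar>lead_coeff q\<bar> \<ge> 1" using q0 by (simp add: int_one_le_iff_zero_less)
      then have "\<bar>lead_coeff p\<bar> * 1 \<le> \<bar>lead_coeff p\<bar> * \<bar>lead_coeff q\<bar>"
        by (intro mult_left_mono) auto
      then show ?thesis using lc by (simp add: abs_mult)
    qed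
    then have "\<bar>real_of_int (lead_coeff p)\<bar> \<le> \<bar>real_of_int am\<bar>" by linarith
    then have "\<bar>real_of_int (lead_coeff p)\<bar> * r \<le> \<bar>real_of_int am\<bar> * r"
      using r0 by (intro mult_right_mono) auto
    then have lcr: "\<bar>real_of_int (lead_coeff p)\<bar> * r \<le> 1" using ram by (simp add: mult.commute)
    have dp: "degree p \<ge> 1"
    proof (rule ccontr)
      assume "\<not> degree p \<ge> 1"
      then have d0: "degree p = 0" by simp
      have "content p * content q = 1" using assms(3) fpq by (simp add: content_mult)
      then have cu: "is_unit (content p)" using dvd_triv_left[of "content p" "content q"] by simp
      have pc: "p = [:coeff p 0:]" using degree_0_id[OF d0] by simp
      have "content p = normalize (coeff p 0)" by (subst pc) (simp only: content_const)
      then have "is_unit (coeff p 0)" using cu by simp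
      then have "is_unit p" by (subst pc) (simp add: is_unit_const_poly_iff)
      then show False using irr by (simp add: irreducible_def)
    qed
    show ?thesis using p0 factor_big[OF dp c0 r0 r1 lcr] by simp
  qed
  have "size P \<le> bigc r (prod_mset P)" using fac by (intro size_le_bigc) auto
  then have sz: "size P \<le> m - j" using Pf big by simp
  have "j = m - 1 \<longrightarrow> irreducible f"
  proof
    assume "j = m - 1"
    then have "size P \<le> 1" using sz assms(1) by simp
    moreover have "P \<noteq> {#}" using Pf nu by auto
    ultimately have "size P = 1" by (cases "size P") auto
    then obtain p where "P = {#p#}" by (metis size_1_singleton_mset)
    then show "irreducible f" using Pf Pirr by auto
  qed
  then show ?thesis using Pirr Pf sz by blast
qed

end
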